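(* Let $A$ be a commutative noetherian local ring and let $x,y\in A$ be a regular exact pair of zero divisors. Let $a\in A$ be weakly regular on the $A$-module $A/(x,y)$, and let $b\in A$ be a non-unit. Then (a) the $A$-modules $G_a$ and $G_{ab}$ are not isomorphic, and (b) the $A$-modules $H_a$ and $H_{ab}$ are not isomorphic.
   Context: Two non-units $x,y\in A$ form an exact pair of zero divisors if $\operatorname{Ann}_A(x)=(y)$ and $\operatorname{Ann}_A(y)=(x)$; such a pair is regular if $(x)\cap(y)=0$. An element $a\in A$ is weakly regular on a module $M$ if multiplication by $a$ on $M$ is injective. For $a\in A$, let $\gamma_a=\begin{pmatrix} x & a\\ 0 & y\end{pmatrix}$ and $\eta_a=\begin{pmatrix} y & -a\\ 0 & x\end{pmatrix}$, viewed as $A$-linear maps $A^2\to A^2$ acting on column vectors, and set $G_a=\operatorname{Coker}\gamma_a$, $H_a=\operatorname{Coker}\eta_a$. *)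

theory Defs
  imports Main
begin

text \<open>Ideals of a commutative ring (type-class idiom; the ring is the whole type 'a).\<close>
definition is_ideal :: "'a::comm_ring_1 set \<Rightarrow> bool" where
  "is_ideal I \<longleftrightarrow> 0 \<in> I \<and> (\<forall>u\<in>I. \<forall>v\<in>I. u + v \<in> I) \<and> (\<forall>r. \<forall>u\<in>I. r * u \<in> I)"

definition gen_ideal :: "'a::comm_ring_1 set \<Rightarrow> 'a set" where
  "gen_ideal F = {s. \<exists>c. s = (\<Sum>f\<in>F. c f * f)}"

definition noetherian_ring :: "'a::comm_ring_1 itself \<Rightarrow> bool" where
  "noetherian_ring _ \<longleftrightarrow> (\<forall>I::'a set. is_ideal I \<longrightarrow> (\<exists>F. finite F \<and> I = gen_ideal F))"

definition maximal_ideal :: "'a::comm_ring_1 set \<Rightarrow> bool" where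
  "maximal_ideal M \<longleftrightarrow> is_ideal M \<and> M \<noteq> UNIV \<and>
     (\<forall>J. is_ideal J \<and> M \<subseteq> J \<longrightarrow> J = M \<or> J = UNIV)"

definition local_ring :: "'a::comm_ring_1 itself \<Rightarrow> bool" where
  "local_ring _ \<longleftrightarrow> (\<exists>!M::'a set. maximal_ideal M)"

definition ann :: "'a::comm_ring_1 \<Rightarrow> 'a set" where
  "ann x = {r. r * x = 0}"

definition principal :: "'a::comm_ring_1 \<Rightarrow> 'a set" where
  "principal x = {x * c | c. True}"

definition nonunit :: "'a::comm_ring_1 \<Rightarrow> bool" where
  "nonunit x \<longleftrightarrow> \<not> (x dvd 1)"

definition exact_pair :: "'a::comm_ring_1 \<Rightarrow> 'a \<Rightarrow> bool" where
  "exact_pair x y \<longleftrightarrow> nonunit x \<and> nonunit y \<and> ann x = principal y \<and> ann y = principal x"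

definition regular_exact_pair :: "'a::comm_ring_1 \<Rightarrow> 'a \<Rightarrow> bool" where
  "regular_exact_pair x y \<longleftrightarrow> exact_pair x y \<and> principal x \<inter> principal y = {0}"

text \<open>a is weakly regular on A/(x,y): multiplication by a on A/(x,y) is injective.\<close>
definition weakly_regular_mod :: "'a::comm_ring_1 \<Rightarrow> 'a \<Rightarrow> 'a \<Rightarrow> bool" where
  "weakly_regular_mod a x y \<longleftrightarrow>
     (\<forall>r s. a * r - a * s \<in> gen_ideal {x, y} \<longrightarrow> r - s \<in> gen_ideal {x, y})"

text \<open>Free module A^2 as pairs (column vectors), with its operations.\<close>
definition vadd :: "'a::comm_ring_1 \<times> 'a \<Rightarrow> 'a \<times> 'a \<Rightarrow> 'a \<times> 'a" where
  "vadd u v = (fst u + fst v, snd u + snd v)"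

definition vsub :: "'a::comm_ring_1 \<times> 'a \<Rightarrow> 'a \<times> 'a \<Rightarrow> 'a \<times> 'a" where
  "vsub u v = (fst u - fst v, snd u - snd v)"

definition vscale :: "'a::comm_ring_1 \<Rightarrow> 'a \<times> 'a \<Rightarrow> 'a \<times> 'a" where
  "vscale r u = (r * fst u, r * snd u)"

text \<open>Action of the 2x2 matrix [[p, q], [r, s]] on column vectors.\<close>
definition mat2 :: "'a::comm_ring_1 \<Rightarrow> 'a \<Rightarrow> 'a \<Rightarrow> 'a \<Rightarrow> 'a \<times> 'a \<Rightarrow> 'a \<times> 'a" where
  "mat2 p q r s v = (p * fst v + q * snd v, r * fst v + s * snd v)"

definition gamma :: "'a::comm_ring_1 \<Rightarrow> 'a \<Rightarrow> 'a \<Rightarrow> 'a \<times> 'a \<Rightarrow> 'a \<times> 'a" where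
  "gamma x y a = mat2 x a 0 y"

definition eta :: "'a::comm_ring_1 \<Rightarrow> 'a \<Rightarrow> 'a \<Rightarrow> 'a \<times> 'a \<Rightarrow> 'a \<times> 'a" where
  "eta x y a = mat2 y (- a) 0 x"

text \<open>Cokernel of an endomorphism phi of A^2: the quotient A^2 / im phi.
  Elements are cosets; cls phi v is the class of v.\<close>
definition cls :: "('a::comm_ring_1 \<times> 'a \<Rightarrow> 'a \<times> 'a) \<Rightarrow> 'a \<times> 'a \<Rightarrow> ('a \<times> 'a) set" where
  "cls phi v = {w. vsub w v \<in> range phi}"

definition coker :: "('a::comm_ring_1 \<times> 'a \<Rightarrow> 'a \<times> 'a) \<Rightarrow> ('a \<times> 'a) set set" where
  "coker phi = range (cls phi)"

text \<open>Isomorphism of A-modules Coker phi and Coker psi: a bijection of the coset sets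
  compatible with addition and scalar multiplication of cosets (defined via representatives).\<close>
definition coker_iso :: "('a::comm_ring_1 \<times> 'a \<Rightarrow> 'a \<times> 'a) \<Rightarrow> ('a \<times> 'a \<Rightarrow> 'a \<times> 'a) \<Rightarrow> bool" where
  "coker_iso phi psi \<longleftrightarrow> (\<exists>f. bij_betw f (coker phi) (coker psi) \<and>
     (\<forall>u v u' v'. f (cls phi u) = cls psi u' \<longrightarrow> f (cls phi v) = cls psi v' \<longrightarrow>
        f (cls phi (vadd u v)) = cls psi (vadd u' v')) \<and>
     (\<forall>r u u'. f (cls phi u) = cls psi u' \<longrightarrow> f (cls phi (vscale r u)) = cls psi (vscale r u')))"

end

theory Submission imports Defs begin

lemma exists_max:
  fixes r :: "'a::comm_ring_1"
  assumes "\<not> r dvd 1"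
  shows "\<exists>M. maximal_ideal M \<and> r \<in> M"
proof -
  let ?A = "{I::'a set. is_ideal I \<and> 1 \<notin> I \<and> r \<in> I}"
  have pr: "principal r \<in> ?A"
  proof -
    have "0 \<in> principal r" unfolding principal_def by (auto intro: exI[of _ 0])
    moreover have "\<forall>u\<in>principal r. \<forall>v\<in>principal r. u + v \<in> principal r"
      unfolding principal_def by (auto simp: distrib_left[symmetric])
    moreover have "\<forall>s. \<forall>u\<in>principal r. s * u \<in> principal r"
      unfolding principal_def by (auto, metis mult.left_commute)
    moreover have "1 \<notin> principal r" using assms unfolding principal_def
      by (auto, metis dvdI)
    moreover have "r \<in> principal r" unfolding principal_def by (auto intro: exI[of _ 1])
    ultimately show ?thesis unfolding is_ideal_def by blast
  qed
  have "\<exists>M\<in>?A. \<forall>X\<in>?A. M \<subseteq> X \<longrightarrow> X = M"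
  proof (rule subset_Zorn_nonempty)
    show "?A \<noteq> {}" using pr by blast
    fix C assume ne: "C \<noteq> {}" and ch: "subset.chain ?A C"
    have sub: "C \<subseteq> ?A" and cmp: "\<And>X Y. X \<in> C \<Longrightarrow> Y \<in> C \<Longrightarrow> X \<subseteq> Y \<or> Y \<subseteq> X"
      using ch unfolding subset.chain_def by auto
    have "is_ideal (\<Union>C)"
      unfolding is_ideal_def
    proof (intro conjI ballI allI)
      show "0 \<in> \<Union>C" using ne sub unfolding is_ideal_def by blast
    next
      fix u v assume "u \<in> \<Union>C" "v \<in> \<Union>C"
      then obtain X Y where X: "X \<in> C" "u \<in> X" and Y: "Y \<in> C" "v \<in> Y" by blast
      show "u + v \<in> \<Union>C"
        using cmp[OF X(1) Y(1)] X Y sub unfolding is_ideal_def by blast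
    next
      fix s u assume "u \<in> \<Union>C"
      then show "s * u \<in> \<Union>C" using sub unfolding is_ideal_def by blast
    qed
    then show "\<Union>C \<in> ?A" using ne sub by blast
  qed
  then obtain M where M: "M \<in> ?A" and mx: "\<forall>X\<in>?A. M \<subseteq> X \<longrightarrow> X = M" by blast
  have "maximal_ideal M"
    unfolding maximal_ideal_def
  proof (intro conjI allI impI)
    show "is_ideal M" using M by blast
    show "M \<noteq> UNIV" using M by blast
    fix J assume J: "is_ideal J \<and> M \<subseteq> J"
    show "J = M \<or> J = UNIV"
    proof (cases "1 \<in> J")
      case True
      then have "\<forall>s. s * 1 \<in> J" using J unfolding is_ideal_def by blast
      then show ?thesis by auto
    next
      case False
      then show ?thesis using mx J M by blast
    qed
  qed
  then show ?thesis using M by blast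
qed

lemma local_nonunits:
  assumes "local_ring TYPE('a::comm_ring_1)"
  shows "is_ideal {r::'a. \<not> r dvd 1}"
proof -
  obtain M :: "'a set" where M: "maximal_ideal M" and U: "\<And>N. maximal_ideal N \<Longrightarrow> N = M"
    using assms unfolding local_ring_def by blast
  have idl: "is_ideal M" and nU: "M \<noteq> UNIV" using M unfolding maximal_ideal_def by blast+
  have mul: "\<And>r u. u \<in> M \<Longrightarrow> r * u \<in> M" using idl unfolding is_ideal_def by blast
  have "M = {r. \<not> r dvd 1}"
  proof (rule equalityI)
    show "M \<subseteq> {r. \<not> r dvd 1}"
    proof
      fix u assume u: "u \<in> M"
      show "u \<in> {r. \<not> r dvd 1}"
      proof (rule CollectI, rule notI)
        assume "u dvd 1"
        then obtain v where uv: "1 = u * v" by (rule dvdE)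
        have vu: "v * u \<in> M" using mul[OF u] .
        have "v * u = u * v" by (rule mult.commute)
        also have "\<dots> = 1" using uv by (rule sym)
        finally have one: "1 \<in> M" using vu by simp
        have "t \<in> M" for t using mul[OF one, of t] by simp
        then show False using nU by blast
      qed
    qed
    show "{r. \<not> r dvd 1} \<subseteq> M"
      using exists_max U by blast
  qed
  then show ?thesis using M unfolding maximal_ideal_def by blast
qed

lemma gen2_iff:
  fixes x y t :: "'a::comm_ring_1"
  shows "t \<in> gen_ideal {x, y} \<longleftrightarrow> (\<exists>r s. t = r * x + s * y)"
proof (cases "x = y")
  case True
  show ?thesis
  proof
    assume "t \<in> gen_ideal {x, y}"
    then obtain c where "t = c x * x" using True unfolding gen_ideal_def by auto
    then show "\<exists>r s. t = r * x + s * y" by (intro exI[of _ "c x"] exI[of _ 0]) simp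
  next
    assume "\<exists>r s. t = r * x + s * y"
    then obtain r s where "t = r * x + s * y" by blast
    then have "t = (\<lambda>_. r + s) x * x" using True by (simp add: distrib_right)
    then show "t \<in> gen_ideal {x, y}" using True unfolding gen_ideal_def by auto
  qed
next
  case False
  show ?thesis
  proof
    assume "t \<in> gen_ideal {x, y}"
    then obtain c where "t = c x * x + c y * y" using False unfolding gen_ideal_def by auto
    then show "\<exists>r s. t = r * x + s * y" by blast
  next
    assume "\<exists>r s. t = r * x + s * y"
    then obtain r s where "t = r * x + s * y" by blast
    show "t \<in> gen_ideal {x, y}" unfolding gen_ideal_def
    proof (rule CollectI, rule exI[where x="\<lambda>z. if z = x then r else s"])
      show "t = (\<Sum>f\<in>{x, y}. (if f = x then r else s) * f)"
        using False \<open>t = r * x + s * y\<close> by simp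
    qed
  qed
qed

lemma aux_add:
  fixes w u v x a p q p' q' :: "'a::comm_ring_1"
  assumes "w - u = x*p' + a*q'" "u - v = x*p + a*q"
  shows "w - v = x*(p'+p) + a*(q'+q)"
proof -
  have "w - v = (w - u) + (u - v)" by simp
  also have "\<dots> = x*(p'+p) + a*(q'+q)" unfolding assms by (simp add: distrib_left add_ac)
  finally show ?thesis .
qed

lemma aux_sub:
  fixes w u v x a p q p' q' :: "'a::comm_ring_1"
  assumes "w - v = x*p' + a*q'" "u - v = x*p + a*q"
  shows "w - u = x*(p'-p) + a*(q'-q)"
proof -
  have "w - u = (w - v) - (u - v)" by simp
  also have "\<dots> = x*(p'-p) + a*(q'-q)" unfolding assms by (simp add: right_diff_distrib)
  finally show ?thesis .
qed

lemma aux_add1: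
  fixes w u v y q q' :: "'a::comm_ring_1"
  assumes "w - u = y*q'" "u - v = y*q"
  shows "w - v = y*(q'+q)"
proof -
  have "w - v = (w - u) + (u - v)" by simp
  also have "\<dots> = y*(q'+q)" unfolding assms by (simp add: distrib_left)
  finally show ?thesis .
qed

lemma aux_sub1:
  fixes w u v y q q' :: "'a::comm_ring_1"
  assumes "w - v = y*q'" "u - v = y*q"
  shows "w - u = y*(q'-q)"
proof -
  have "w - u = (w - v) - (u - v)" by simp
  also have "\<dots> = y*(q'-q)" unfolding assms by (simp add: right_diff_distrib)
  finally show ?thesis .
qed

lemma cls_gamma_eq:
  "cls (gamma x y a) u = cls (gamma x y a) v \<longleftrightarrow>
     (\<exists>p q. fst u - fst v = x * p + a * q \<and> snd u - snd v = y * q)"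
proof
  assume h: "cls (gamma x y a) u = cls (gamma x y a) v"
  have "u \<in> cls (gamma x y a) u" unfolding cls_def vsub_def gamma_def mat2_def
    by (auto intro!: image_eqI[of _ _ "(0,0)"])
  then have "vsub u v \<in> range (gamma x y a)" using h unfolding cls_def by simp
  then obtain p q where "vsub u v = gamma x y a (p, q)" by auto
  then show "\<exists>p q. fst u - fst v = x * p + a * q \<and> snd u - snd v = y * q"
    unfolding vsub_def gamma_def mat2_def by auto
next
  assume "\<exists>p q. fst u - fst v = x * p + a * q \<and> snd u - snd v = y * q"
  then obtain p q where pq: "fst u - fst v = x * p + a * q" "snd u - snd v = y * q" by blast
  show "cls (gamma x y a) u = cls (gamma x y a) v"
  proof (rule set_eqI)
    fix w
    show "w \<in> cls (gamma x y a) u \<longleftrightarrow> w \<in> cls (gamma x y a) v"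
    proof
      assume "w \<in> cls (gamma x y a) u"
      then obtain p' q' where "vsub w u = gamma x y a (p', q')" unfolding cls_def by auto
      then have e: "fst w - fst u = x * p' + a * q'" "snd w - snd u = y * q'"
        unfolding vsub_def gamma_def mat2_def by auto
      have "vsub w v = gamma x y a (p' + p, q' + q)"
        using aux_add[OF e(1) pq(1)] aux_add1[OF e(2) pq(2)]
        unfolding vsub_def gamma_def mat2_def by simp
      then show "w \<in> cls (gamma x y a) v" unfolding cls_def by auto
    next
      assume "w \<in> cls (gamma x y a) v"
      then obtain p' q' where "vsub w v = gamma x y a (p', q')" unfolding cls_def by auto
      then have e: "fst w - fst v = x * p' + a * q'" "snd w - snd v = y * q'"
        unfolding vsub_def gamma_def mat2_def by auto
      have "vsub w u = gamma x y a (p' - p, q' - q)"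
        using aux_sub[OF e(1) pq(1)] aux_sub1[OF e(2) pq(2)]
        unfolding vsub_def gamma_def mat2_def by simp
      then show "w \<in> cls (gamma x y a) u" unfolding cls_def by auto
    qed
  qed
qed

lemma nu_add: assumes "is_ideal {r::'a::comm_ring_1. \<not> r dvd 1}" "\<not> (s::'a) dvd 1" "\<not> (t::'a) dvd 1"
  shows "\<not> (s + t) dvd 1"
proof -
  have h: "\<forall>u\<in>{r::'a. \<not> r dvd 1}. \<forall>v\<in>{r. \<not> r dvd 1}. u + v \<in> {r. \<not> r dvd 1}"
    using assms(1) unfolding is_ideal_def by (elim conjE)
  have "s \<in> {r::'a. \<not> r dvd 1}" "t \<in> {r::'a. \<not> r dvd 1}" using assms(2,3) by simp_all
  from bspec[OF bspec[OF h this(1)] this(2)] show ?thesis by simp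
qed

lemma nu_mult: "\<not> (t::'a::comm_ring_1) dvd 1 \<Longrightarrow> \<not> (s * t) dvd 1"
  using dvd_mult_right by blast

lemma alg1: "(a::'a::comm_ring_1) * w - - y * z = x * p + a * b * q \<Longrightarrow> a * w - a * (b * q) = p * x + (- z) * y" by (simp add: algebra_simps)
lemma alg2: "(a::'a::comm_ring_1) * w - - y * z = y * q \<Longrightarrow> a * w - a * 0 = 0 * x + (q - z) * y" by (simp add: algebra_simps)
lemma alg3: "(w::'a::comm_ring_1) - b * q = r1 * x + s1 * y \<Longrightarrow> w = r1 * x + (s1 * y + q * b)" by (simp add: algebra_simps)
lemma alg4: "(w1::'a::comm_ring_1) * f1 + w2 * f2 - 1 = x * p' + a * q' \<Longrightarrow> 1 = f1 * w1 + (f2 * w2 + ((- p') * x + (- q') * a))" by (simp add: algebra_simps)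
lemma alg5: "1 - (f * (k * z) + s * z) = x * p + a * b * (q::'a::comm_ring_1) \<Longrightarrow> 1 - (f * k + s) * z = p * x + q * a * b" by (simp add: algebra_simps)
lemma alg6: assumes "0 - (f * (k * z) + s * z) = y * (q::'a::comm_ring_1)" shows "(f * k + s) * z = (- 1) * (q * y)"
proof -
  have "- (f * (k * z) + s * z) = y * q" using assms by (simp only: diff_0)
  then have "f * (k * z) + s * z = - (y * q)" by (simp only: minus_equation_iff)
  then show ?thesis by (simp add: algebra_simps)
qed

lemma alg7: assumes "0 - (f * (k * z) + s * z) = x * p + a * b * (q::'a::comm_ring_1)"
  shows "(f * k + s) * z = (- p) * x + (- q) * a * b"
proof -
  have "- (f * (k * z) + s * z) = x * p + a * b * q" using assms by (simp only: diff_0)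
  then have "f * (k * z) + s * z = - (x * p + a * b * q)" by (simp only: minus_equation_iff)
  then show ?thesis by (simp add: algebra_simps)
qed
lemma alg8: "1 - (f * (k * z) + s * z) = y * (q::'a::comm_ring_1) \<Longrightarrow> 1 - (f * k + s) * z = q * y"
  by (simp add: algebra_simps)

lemma gamma_noniso:
  fixes x y a b :: "'a::comm_ring_1"
  assumes N: "is_ideal {r::'a. \<not> r dvd 1}"
    and nx: "\<not> x dvd 1" and ny: "\<not> y dvd 1"
    and wr: "weakly_regular_mod a x y"
    and nb: "\<not> b dvd 1"
  shows "\<not> coker_iso (gamma x y a) (gamma x y (a * b))"
proof
  let ?\<phi> = "gamma x y a" and ?\<psi> = "gamma x y (a * b)"
  assume "coker_iso ?\<phi> ?\<psi>"
  then obtain f where bij: "bij_betw f (coker ?\<phi>) (coker ?\<psi>)"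
    and fadd: "\<And>u v u' v'. f (cls ?\<phi> u) = cls ?\<psi> u' \<Longrightarrow> f (cls ?\<phi> v) = cls ?\<psi> v' \<Longrightarrow>
        f (cls ?\<phi> (vadd u v)) = cls ?\<psi> (vadd u' v')"
    and fsc: "\<And>r u u'. f (cls ?\<phi> u) = cls ?\<psi> u' \<Longrightarrow> f (cls ?\<phi> (vscale r u)) = cls ?\<psi> (vscale r u')"
    unfolding coker_iso_def by blast
  have img: "\<And>v. \<exists>v'. f (cls ?\<phi> v) = cls ?\<psi> v'"
  proof -
    fix v
    have "cls ?\<phi> v \<in> coker ?\<phi>" unfolding coker_def by simp
    then have "f (cls ?\<phi> v) \<in> coker ?\<psi>" using bij bij_betwE by blast
    then show "\<exists>v'. f (cls ?\<phi> v) = cls ?\<psi> v'" unfolding coker_def by auto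
  qed
  have surj: "\<And>t. \<exists>q. f (cls ?\<phi> q) = cls ?\<psi> t"
  proof -
    fix t
    have "cls ?\<psi> t \<in> coker ?\<psi>" unfolding coker_def by simp
    then have "cls ?\<psi> t \<in> f ` coker ?\<phi>" using bij unfolding bij_betw_def by simp
    then show "\<exists>q. f (cls ?\<phi> q) = cls ?\<psi> t" unfolding coker_def by auto
  qed
  have inj: "\<And>u v. f (cls ?\<phi> u) = f (cls ?\<phi> v) \<Longrightarrow> cls ?\<phi> u = cls ?\<phi> v"
  proof -
    fix u v assume "f (cls ?\<phi> u) = f (cls ?\<phi> v)"
    moreover have "inj_on f (coker ?\<phi>)" using bij unfolding bij_betw_def by blast
    ultimately show "cls ?\<phi> u = cls ?\<phi> v" unfolding inj_on_def coker_def by blast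
  qed
  have comb: "\<And>s1 s2 q1 q2 t1 t2. f (cls ?\<phi> q1) = cls ?\<psi> t1 \<Longrightarrow> f (cls ?\<phi> q2) = cls ?\<psi> t2 \<Longrightarrow>
      f (cls ?\<phi> (vadd (vscale s1 q1) (vscale s2 q2))) = cls ?\<psi> (vadd (vscale s1 t1) (vscale s2 t2))"
    using fadd fsc by blast
  obtain q1 where q1: "f (cls ?\<phi> q1) = cls ?\<psi> (1, 0)" using surj by blast
  obtain q2 where q2: "f (cls ?\<phi> q2) = cls ?\<psi> (0, 1)" using surj by blast
  obtain z where z: "f (cls ?\<phi> (0, 1)) = cls ?\<psi> z" using img by blast
  have n1: "\<not> (1::'a) dvd 1 \<Longrightarrow> False" by simp
  show False
  proof (cases "a dvd 1")
    case False
    obtain w where w: "f (cls ?\<phi> (1, 0)) = cls ?\<psi> w" using img by blast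
    have "cls ?\<phi> (vscale a (1, 0)) = cls ?\<phi> (vscale (- y) (0, 1))"
      unfolding cls_gamma_eq vscale_def by (rule exI[of _ 0], rule exI[of _ 1]) simp
    then have "cls ?\<psi> (vscale a w) = cls ?\<psi> (vscale (- y) z)"
      using fsc[OF w, of a] fsc[OF z, of "- y"] by simp
    then obtain p q where raw: "a * fst w - - y * fst z = x * p + a * b * q"
        "a * snd w - - y * snd z = y * q"
      unfolding cls_gamma_eq vscale_def by auto
    have "a * fst w - a * (b * q) = p * x + (- fst z) * y" using alg1[OF raw(1)] .
    then have "a * fst w - a * (b * q) \<in> gen_ideal {x, y}" unfolding gen2_iff by blast
    then have "fst w - b * q \<in> gen_ideal {x, y}" using wr unfolding weakly_regular_mod_def by blast
    then obtain r1 s1 where rs1: "fst w - b * q = r1 * x + s1 * y" unfolding gen2_iff by blast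
    have fw: "fst w = r1 * x + (s1 * y + q * b)" using alg3[OF rs1] .
    have nw1: "\<not> fst w dvd 1" unfolding fw
      by (rule nu_add[OF N nu_mult[OF nx] nu_add[OF N nu_mult[OF ny] nu_mult[OF nb]]])
    have "a * snd w - a * 0 = 0 * x + (q - snd z) * y" using alg2[OF raw(2)] .
    then have "a * snd w - a * 0 \<in> gen_ideal {x, y}" unfolding gen2_iff by blast
    then have "snd w - 0 \<in> gen_ideal {x, y}" using wr unfolding weakly_regular_mod_def by blast
    then obtain r2 s2 where rs2: "snd w - 0 = r2 * x + s2 * y" unfolding gen2_iff by blast
    have nw2: "\<not> snd w dvd 1"
      using rs2 nu_add[OF N nu_mult[OF nx] nu_mult[OF ny]] by simp
    have "f (cls ?\<phi> (vadd (vscale (fst w) q1) (vscale (snd w) q2)))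
        = cls ?\<psi> (vadd (vscale (fst w) (1, 0)) (vscale (snd w) (0, 1)))"
      using comb[OF q1 q2] .
    also have "vadd (vscale (fst w) (1, 0)) (vscale (snd w) (0, 1)) = w"
      unfolding vadd_def vscale_def by simp
    finally have "f (cls ?\<phi> (vadd (vscale (fst w) q1) (vscale (snd w) q2))) = f (cls ?\<phi> (1, 0))"
      using w by simp
    then have "cls ?\<phi> (vadd (vscale (fst w) q1) (vscale (snd w) q2)) = cls ?\<phi> (1, 0)" by (rule inj)
    then obtain p' q' where e: "fst w * fst q1 + snd w * fst q2 - 1 = x * p' + a * q'"
      unfolding cls_gamma_eq vadd_def vscale_def by auto
    have one: "1 = fst q1 * fst w + (fst q2 * snd w + ((- p') * x + (- q') * a))" using alg4[OF e] .
    have "\<not> (fst q1 * fst w + (fst q2 * snd w + ((- p') * x + (- q') * a))) dvd 1"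
      by (rule nu_add[OF N nu_mult[OF nw1] nu_add[OF N nu_mult[OF nw2]
            nu_add[OF N nu_mult[OF nx] nu_mult[OF False]]]])
    then have "\<not> (1::'a) dvd 1" unfolding one[symmetric] .
    then show False by simp
  next
    case True
    then obtain c where c: "1 = a * c" by (auto elim: dvdE)
    define k where "k = - (c * y)"
    have "cls ?\<phi> (1, 0) = cls ?\<phi> (vscale k (0, 1))"
      unfolding cls_gamma_eq vscale_def k_def using c
      by (intro exI[of _ 0] exI[of _ c]) (simp add: mult.commute)
    then have w: "f (cls ?\<phi> (1, 0)) = cls ?\<psi> (vscale k z)" using fsc[OF z, of k] by simp
    have key: "\<exists>r. \<not> (1 - r * fst z) dvd 1 \<and> \<not> (r * snd z) dvd 1"
      if qe: "f (cls ?\<phi> qq) = cls ?\<psi> (1, 0)" for qq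
    proof -
      have qeq: "vadd (vscale (fst qq) (1, 0)) (vscale (snd qq) (0, 1)) = qq"
        unfolding vadd_def vscale_def by simp
      have "f (cls ?\<phi> qq) = cls ?\<psi> (vadd (vscale (fst qq) (vscale k z)) (vscale (snd qq) z))"
        using comb[OF w z, of "fst qq" "snd qq"] unfolding qeq .
      then have "cls ?\<psi> (1, 0) = cls ?\<psi> (vadd (vscale (fst qq) (vscale k z)) (vscale (snd qq) z))"
        using qe by simp
      then obtain p q where raw: "1 - (fst qq * (k * fst z) + snd qq * fst z) = x * p + a * b * q"
          "0 - (fst qq * (k * snd z) + snd qq * snd z) = y * q"
        unfolding cls_gamma_eq vadd_def vscale_def by auto
      define r where "r = fst qq * k + snd qq"
      have e1: "1 - r * fst z = p * x + q * a * b" using alg5[OF raw(1)] unfolding r_def .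
      have e2: "r * snd z = (- 1) * (q * y)" using alg6[OF raw(2)] unfolding r_def .
      have "\<not> (1 - r * fst z) dvd 1" unfolding e1
        by (rule nu_add[OF N nu_mult[OF nx] nu_mult[OF nb]])
      moreover have "\<not> (r * snd z) dvd 1" unfolding e2 using nu_mult[OF nu_mult[OF ny]] by blast
      ultimately show ?thesis by blast
    qed
    obtain r where r: "\<not> (1 - r * fst z) dvd 1" "\<not> (r * snd z) dvd 1" using key[OF q1] by blast
    have key2: "\<exists>r. \<not> (r * fst z) dvd 1 \<and> \<not> (1 - r * snd z) dvd 1"
      if qe: "f (cls ?\<phi> qq) = cls ?\<psi> (0, 1)" for qq
    proof -
      have qeq: "vadd (vscale (fst qq) (1, 0)) (vscale (snd qq) (0, 1)) = qq"
        unfolding vadd_def vscale_def by simp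
      have "f (cls ?\<phi> qq) = cls ?\<psi> (vadd (vscale (fst qq) (vscale k z)) (vscale (snd qq) z))"
        using comb[OF w z, of "fst qq" "snd qq"] unfolding qeq .
      then have "cls ?\<psi> (0, 1) = cls ?\<psi> (vadd (vscale (fst qq) (vscale k z)) (vscale (snd qq) z))"
        using qe by simp
      then obtain p q where raw: "0 - (fst qq * (k * fst z) + snd qq * fst z) = x * p + a * b * q"
          "1 - (fst qq * (k * snd z) + snd qq * snd z) = y * q"
        unfolding cls_gamma_eq vadd_def vscale_def by auto
      define r where "r = fst qq * k + snd qq"
      have e1: "r * fst z = (- p) * x + (- q) * a * b" using alg7[OF raw(1)] unfolding r_def .
      have e2: "1 - r * snd z = q * y" using alg8[OF raw(2)] unfolding r_def .
      have "\<not> (r * fst z) dvd 1" unfolding e1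
        by (rule nu_add[OF N nu_mult[OF nx] nu_mult[OF nb]])
      moreover have "\<not> (1 - r * snd z) dvd 1" unfolding e2 by (rule nu_mult[OF ny])
      ultimately show ?thesis by blast
    qed
    obtain s where s: "\<not> (s * fst z) dvd 1" "\<not> (1 - s * snd z) dvd 1" using key2[OF q2] by blast
    have u1: "(r * fst z) dvd 1"
    proof (rule ccontr)
      assume "\<not> (r * fst z) dvd 1"
      from nu_add[OF N r(1) this] show False by simp
    qed
    have u2: "(s * snd z) dvd 1"
    proof (rule ccontr)
      assume "\<not> (s * snd z) dvd 1"
      from nu_add[OF N s(2) this] show False by simp
    qed
    have "(r * fst z) * (s * snd z) dvd 1 * 1" using mult_dvd_mono[OF u1 u2] .
    moreover have "(r * fst z) * (s * snd z) = (s * fst z) * (r * snd z)" by (simp add: ac_simps)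
    ultimately have "(s * fst z) * (r * snd z) dvd 1" by simp
    moreover have "\<not> (s * fst z) * (r * snd z) dvd 1" by (rule nu_mult[OF r(2)])
    ultimately show False by blast
  qed
qed

theorem theorem5p2:
  fixes x y a b :: "'a::comm_ring_1"
  assumes "noetherian_ring TYPE('a)"
    and "local_ring TYPE('a)"
    and "regular_exact_pair x y"
    and "weakly_regular_mod a x y"
    and "nonunit b"
  shows "\<not> coker_iso (gamma x y a) (gamma x y (a * b)) \<and>
         \<not> coker_iso (eta x y a) (eta x y (a * b))"
proof
  have N: "is_ideal {r::'a. \<not> r dvd 1}" using local_nonunits[OF assms(2)] .
  have nx: "\<not> x dvd 1" and ny: "\<not> y dvd 1" and nb: "\<not> b dvd 1"
    using assms(3,5) unfolding regular_exact_pair_def exact_pair_def nonunit_def by auto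
  show "\<not> coker_iso (gamma x y a) (gamma x y (a * b))"
    by (rule gamma_noniso[OF N nx ny assms(4) nb])
  have wr: "weakly_regular_mod (- a) y x"
    unfolding weakly_regular_mod_def
  proof (intro allI impI)
    fix r s :: 'a
    assume "- a * r - - a * s \<in> gen_ideal {y, x}"
    then obtain c d where "- a * r - - a * s = c * y + d * x" unfolding gen2_iff by blast
    then have "a * s - a * r = d * x + c * y" by (simp add: algebra_simps)
    then have "a * s - a * r \<in> gen_ideal {x, y}" unfolding gen2_iff by blast
    then have "s - r \<in> gen_ideal {x, y}" using assms(4) unfolding weakly_regular_mod_def by blast
    then obtain c' d' where "s - r = c' * x + d' * y" unfolding gen2_iff by blast
    then have "r - s = (- d') * y + (- c') * x" by (simp add: algebra_simps)
    then show "r - s \<in> gen_ideal {y, x}" unfolding gen2_iff by blast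
  qed
  have e1: "eta x y a = gamma y x (- a)" unfolding eta_def gamma_def ..
  have e2: "eta x y (a * b) = gamma y x (- a * b)" unfolding eta_def gamma_def by simp
  show "\<not> coker_iso (eta x y a) (eta x y (a * b))"
    unfolding e1 e2 by (rule gamma_noniso[OF N ny nx wr nb])
qed

end
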